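(* The decision problem Maximum Matching cannot be expressed by an ESO universal Horn sentence, even assuming that the input structures come with a successor relation.
   Context: Maximum Matching: given a finite undirected graph $G=(V,E)$ with no self-loops and at most one edge between any pair of vertices, together with a non-negative integer $K$ (part of the input, varying from instance to instance, with $K \le |V|$), decide whether there is a matching $F \subseteq E$ (a set of pairwise vertex-disjoint edges) with $|F| \ge K$. Instances are given as finite structures over an input vocabulary containing the edge relation, a representation of $K$, and a successor relation (the successor relation of a linear order on the universe). ESO universal Horn logic consists of sentences $\exists S_1 \cdots \exists S_m\, \forall \bar{x}\, \psi$, with $S_i$ second-order relation variables and $\psi$ a quantifier-free conjunction of clauses, each containing at most one positive occurrence of an atom built from the quantified relations $S_i$ (literals over the input vocabulary are unrestricted). A problem is expressed by such a sentence if an input structure is a yes-instance exactly when it satisfies the sentence. *)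

theory Defs
  imports Main
begin

text \<open>Finite input structures over the vocabulary (E, Succ, Kr): the universe is
  {0..<univ_size}; E is the edge relation, Succ the successor relation, and K is
  represented by a unary relation Kr whose cardinality is K.\<close>

record input_struct =
  univ_size :: nat
  edge :: "nat \<Rightarrow> nat \<Rightarrow> bool"
  succ :: "nat \<Rightarrow> nat \<Rightarrow> bool"
  kset :: "nat set"

definition is_successor_on :: "nat \<Rightarrow> (nat \<Rightarrow> nat \<Rightarrow> bool) \<Rightarrow> bool" where
  "is_successor_on n S \<longleftrightarrow>
     (\<exists>p. bij_betw p {0..<n} {0..<n} \<and>
          (\<forall>x y. S x y \<longleftrightarrow> (x < n \<and> y < n \<and> p y = Suc (p x))))"

definition valid_instance :: "input_struct \<Rightarrow> bool" where
  "valid_instance A \<longleftrightarrow>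
     univ_size A > 0 \<and>
     (\<forall>x y. edge A x y \<longrightarrow> x < univ_size A \<and> y < univ_size A) \<and>
     (\<forall>x y. edge A x y \<longrightarrow> edge A y x) \<and>
     (\<forall>x. \<not> edge A x x) \<and>
     is_successor_on (univ_size A) (succ A) \<and>
     kset A \<subseteq> {0..<univ_size A}"

definition K_of :: "input_struct \<Rightarrow> nat" where
  "K_of A = card (kset A)"

definition is_matching :: "input_struct \<Rightarrow> nat set set \<Rightarrow> bool" where
  "is_matching A F \<longleftrightarrow>
     (\<forall>e\<in>F. \<exists>u v. e = {u, v} \<and> edge A u v) \<and>
     (\<forall>e\<in>F. \<forall>e'\<in>F. e \<noteq> e' \<longrightarrow> e \<inter> e' = {})"

definition max_matching_yes :: "input_struct \<Rightarrow> bool" where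
  "max_matching_yes A \<longleftrightarrow> (\<exists>F. is_matching A F \<and> card F \<ge> K_of A)"

datatype atom =
    AE nat nat
  | ASucc nat nat
  | AK nat
  | AEq nat nat
  | AS nat "nat list"

datatype lit = Pos atom | Neg atom

type_synonym clause = "lit list"

text \<open>A sentence \<open>\<exists>S_0..S_{m-1} \<forall>x. \<psi>\<close>: rel_arities of S_0..S_{m-1} and the clauses of \<psi>.\<close>
record eso_horn =
  rel_arities :: "nat list"
  matrix :: "clause list"

fun is_so_atom :: "atom \<Rightarrow> bool" where
  "is_so_atom (AS _ _) = True"
| "is_so_atom _ = False"

fun is_pos_so_lit :: "lit \<Rightarrow> bool" where
  "is_pos_so_lit (Pos a) = is_so_atom a"
| "is_pos_so_lit (Neg _) = False"

fun atom_wf :: "nat list \<Rightarrow> atom \<Rightarrow> bool" where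
  "atom_wf ar (AS i xs) \<longleftrightarrow> i < length ar \<and> length xs = ar ! i"
| "atom_wf ar _ \<longleftrightarrow> True"

fun lit_atom :: "lit \<Rightarrow> atom" where
  "lit_atom (Pos a) = a"
| "lit_atom (Neg a) = a"

definition wf_horn :: "eso_horn \<Rightarrow> bool" where
  "wf_horn \<phi> \<longleftrightarrow>
     (\<forall>c\<in>set (matrix \<phi>).
        (\<forall>l\<in>set c. atom_wf (rel_arities \<phi>) (lit_atom l)) \<and>
        length (filter is_pos_so_lit c) \<le> 1)"

fun atom_holds :: "input_struct \<Rightarrow> (nat \<Rightarrow> nat list set) \<Rightarrow> (nat \<Rightarrow> nat) \<Rightarrow> atom \<Rightarrow> bool" where
  "atom_holds A R v (AE x y) = edge A (v x) (v y)"
| "atom_holds A R v (ASucc x y) = succ A (v x) (v y)"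
| "atom_holds A R v (AK x) = (v x \<in> kset A)"
| "atom_holds A R v (AEq x y) = (v x = v y)"
| "atom_holds A R v (AS i xs) = (map v xs \<in> R i)"

fun lit_holds :: "input_struct \<Rightarrow> (nat \<Rightarrow> nat list set) \<Rightarrow> (nat \<Rightarrow> nat) \<Rightarrow> lit \<Rightarrow> bool" where
  "lit_holds A R v (Pos a) = atom_holds A R v a"
| "lit_holds A R v (Neg a) = (\<not> atom_holds A R v a)"

definition sat_horn :: "input_struct \<Rightarrow> eso_horn \<Rightarrow> bool" where
  "sat_horn A \<phi> \<longleftrightarrow>
     (\<exists>R. (\<forall>i < length (rel_arities \<phi>).
             R i \<subseteq> {xs. length xs = rel_arities \<phi> ! i \<and> set xs \<subseteq> {0..<univ_size A}}) \<and>
          (\<forall>v. (\<forall>x. v x < univ_size A) \<longrightarrow>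
               (\<forall>c\<in>set (matrix \<phi>). \<exists>l\<in>set c. lit_holds A R v l)))"

definition expresses :: "eso_horn \<Rightarrow> (input_struct \<Rightarrow> bool) \<Rightarrow> bool" where
  "expresses \<phi> P \<longleftrightarrow> (\<forall>A. valid_instance A \<longrightarrow> (sat_horn A \<phi> \<longleftrightarrow> P A))"

end

theory Submission
  imports Defs
begin

definition strA :: input_struct where
  "strA = \<lparr>univ_size = 2, edge = (\<lambda>x y. (x = 0 \<and> y = 1) \<or> (x = 1 \<and> y = 0)),
           succ = (\<lambda>x y. x = 0 \<and> y = 1), kset = {0}\<rparr>"

definition strB :: input_struct where
  "strB = \<lparr>univ_size = 1, edge = (\<lambda>x y. False), succ = (\<lambda>x y. False), kset = {0}\<rparr>"

lemma validA: "valid_instance strA"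
  unfolding valid_instance_def strA_def is_successor_on_def
  apply simp
  apply (intro conjI)
   apply auto[1]
  apply (rule exI[of _ id])
  by auto

lemma validB: "valid_instance strB"
  unfolding valid_instance_def strB_def is_successor_on_def
  apply simp
  apply (rule exI[of _ id])
  by auto

lemma yesA: "max_matching_yes strA"
  unfolding max_matching_yes_def K_of_def
  apply (rule exI[of _ "{{0,1}}"])
  unfolding is_matching_def strA_def by auto

lemma noB: "\<not> max_matching_yes strB"
proof
  assume "max_matching_yes strB"
  then obtain F where F: "is_matching strB F" "card F \<ge> K_of strB"
    unfolding max_matching_yes_def by blast
  have "F = {}" using F(1) unfolding is_matching_def strB_def by auto
  moreover have "K_of strB = 1" unfolding K_of_def strB_def by simp
  ultimately show False using F(2) by simp
qed

lemma transfer: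
  assumes "sat_horn strA \<phi>" shows "sat_horn strB \<phi>"
proof -
  from assms obtain R where
    R1: "\<forall>i < length (rel_arities \<phi>).
             R i \<subseteq> {xs. length xs = rel_arities \<phi> ! i \<and> set xs \<subseteq> {0..<univ_size strA}}" and
    R2: "\<forall>v. (\<forall>x. v x < univ_size strA) \<longrightarrow>
               (\<forall>c\<in>set (matrix \<phi>). \<exists>l\<in>set c. lit_holds strA R v l)"
    unfolding sat_horn_def by blast
  define R' where "R' = (\<lambda>i. R i \<inter> {xs. set xs \<subseteq> {0}})"
  have uA: "univ_size strA = 2" and uB: "univ_size strB = 1"
    unfolding strA_def strB_def by simp_all
  have atom: "atom_holds strB R' v a = atom_holds strA R v a"
    if v: "\<forall>x. v x < 1" for v a
  proof -
    have v0: "\<And>x. v x = 0" using v by auto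
    show ?thesis
      by (cases a) (auto simp: strA_def strB_def R'_def v0)
  qed
  have lit: "lit_holds strB R' v l = lit_holds strA R v l"
    if v: "\<forall>x. v x < 1" for v l
    using atom[OF v] by (cases l) simp_all
  show ?thesis
    unfolding sat_horn_def
  proof (intro exI[of _ R'] conjI allI impI, goal_cases)
    case (1 i)
    then show "R' i \<subseteq> {xs. length xs = rel_arities \<phi> ! i \<and> set xs \<subseteq> {0..<univ_size strB}}"
      using R1 uB unfolding R'_def by auto
  next
    case (2 v)
    then have v1: "\<forall>x. v x < 1" using uB by simp
    then have "\<forall>x. v x < univ_size strA" using uA by auto
    then have "\<forall>c\<in>set (matrix \<phi>). \<exists>l\<in>set c. lit_holds strA R v l" using R2 by blast
    then show "\<forall>c\<in>set (matrix \<phi>). \<exists>l\<in>set c. lit_holds strB R' v l"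
      using lit[OF v1] by simp
  qed
qed

theorem lemma1:
  shows "\<not> (\<exists>\<phi>. wf_horn \<phi> \<and> expresses \<phi> max_matching_yes)"
proof
  assume "\<exists>\<phi>. wf_horn \<phi> \<and> expresses \<phi> max_matching_yes"
  then obtain \<phi> where e: "expresses \<phi> max_matching_yes" by blast
  have "sat_horn strA \<phi>" using e validA yesA unfolding expresses_def by blast
  then have "sat_horn strB \<phi>" by (rule transfer)
  then have "max_matching_yes strB" using e validB unfolding expresses_def by blast
  then show False using noB by blast
qed

end
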